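(* For all integers $r\ge 0$: \begin{align*} \mathrm{LCD}[6r+3,2] &= 4r+2,\\ \mathrm{LCD}[6r+4,2] &= 4r+2,\\ \mathrm{LCD}[6r+5,2] &= 4r+2,\\ \mathrm{LCD}[6r+6,2] &= 4r+3,\\ \mathrm{LCD}[6r+7,2] &= 4r+4,\\ \mathrm{LCD}[6r+8,2] &= 4r+5. \end{align*} Equivalently, for all integers $r\ge 0$ and $s\in\{3,4,5,6,7,8\}$, \[\mathrm{LCD}[6r+s,2]=4r+\left\lfloor\frac{s}{6}\right\rfloor\bigl(1+(s \bmod 6)\bigr)+2.\]
   Context: All codes are binary linear codes, i.e. subspaces of $\mathbb{F}_2^n$; an $[n,k,d]$ code is one of length $n$, dimension $k$ and minimum Hamming distance $d$. A linear code $C$ is an LCD code (linear code with complementary dual) if $C\cap C^\perp=\{0\}$, where $C^\perp$ is the dual with respect to the standard dot product. For positive integers $n\ge k$, $\mathrm{LCD}[n,k]$ denotes the largest $d$ such that there exists a binary $[n,k,d]$ LCD code. *)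

theory Defs
  imports Main
begin

text \<open>Binary vectors of length n are represented by their supports: a vector
  x in F_2^n is the set of coordinates in {..<n} where it equals 1.
  Vector addition is symmetric difference, the Hamming weight is card,
  and the standard dot product is the parity of card (x \<inter> y).\<close>

definition vadd :: "nat set \<Rightarrow> nat set \<Rightarrow> nat set" where
  "vadd x y = (x - y) \<union> (y - x)"

definition dot :: "nat set \<Rightarrow> nat set \<Rightarrow> bool" where
  "dot x y = odd (card (x \<inter> y))"

definition linear_code :: "nat \<Rightarrow> nat set set \<Rightarrow> bool" where
  "linear_code n C \<longleftrightarrow> C \<subseteq> Pow {..<n} \<and> {} \<in> C \<and> (\<forall>x\<in>C. \<forall>y\<in>C. vadd x y \<in> C)"

text \<open>A binary linear code of dimension k has exactly 2^k codewords.\<close>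
definition code_dim :: "nat set set \<Rightarrow> nat \<Rightarrow> bool" where
  "code_dim C k \<longleftrightarrow> card C = 2 ^ k"

definition dual_code :: "nat \<Rightarrow> nat set set \<Rightarrow> nat set set" where
  "dual_code n C = {y \<in> Pow {..<n}. \<forall>x\<in>C. \<not> dot x y}"

definition min_dist :: "nat set set \<Rightarrow> nat" where
  "min_dist C = Min {card x | x. x \<in> C \<and> x \<noteq> {}}"

definition is_LCD :: "nat \<Rightarrow> nat set set \<Rightarrow> bool" where
  "is_LCD n C \<longleftrightarrow> C \<inter> dual_code n C = {{}}"

definition LCD :: "nat \<Rightarrow> nat \<Rightarrow> nat" where
  "LCD n k = (GREATEST d. \<exists>C. linear_code n C \<and> code_dim C k \<and> is_LCD n C \<and> min_dist C = d)"

end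

theory Submission imports Defs begin

lemma vadd_simps:
  "vadd a a = {}" "vadd {} a = a" "vadd a {} = a"
  "vadd a (vadd a b) = b" "vadd b (vadd a b) = a"
  "vadd (vadd a b) a = b" "vadd (vadd a b) b = a"
  "vadd b a = vadd a b"
  unfolding vadd_def by blast+

lemma vadd_eq_empty: "vadd a b = {} \<longleftrightarrow> a = b"
  unfolding vadd_def by blast

lemma vadd_eq_left: "vadd a b = a \<longleftrightarrow> b = {}"
  unfolding vadd_def by blast

lemma vadd_eq_right: "vadd a b = b \<longleftrightarrow> a = {}"
  unfolding vadd_def by blast

lemma code2_struct:
  assumes "linear_code n C" "card C = 4"
  obtains a b where "C = {{},a,b,vadd a b}" "a \<noteq> {}" "b \<noteq> {}" "a \<noteq> b"
    "a \<subseteq> {..<n}" "b \<subseteq> {..<n}"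
proof -
  have fin: "finite C" using assms(2) card.infinite by fastforce
  have e: "{} \<in> C" and sub: "C \<subseteq> Pow {..<n}" and cl: "\<And>x y. x \<in> C \<Longrightarrow> y \<in> C \<Longrightarrow> vadd x y \<in> C"
    using assms(1) unfolding linear_code_def by auto
  have "card (C - {{}}) = 3" using assms(2) e fin by simp
  hence "C - {{}} \<noteq> {}" by (metis card.empty zero_neq_numeral)
  then obtain a where a: "a \<in> C" "a \<noteq> {}" by blast
  have "card (C - {{},a}) = 2" using assms(2) e fin a
    by (simp add: card_Diff_subset)
  hence "C - {{},a} \<noteq> {}" by (metis card.empty zero_neq_numeral)
  then obtain b where b: "b \<in> C" "b \<noteq> {}" "b \<noteq> a" by blast
  have ab: "vadd a b \<in> C" using cl a b by blast
  have sub4: "{{},a,b,vadd a b} \<subseteq> C" using e a b ab by blast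
  have c4: "card {{},a,b,vadd a b} = 4"
  proof -
    have n: "vadd a b \<noteq> {}" "vadd a b \<noteq> a" "vadd a b \<noteq> b"
      using a b by (auto simp: vadd_eq_empty vadd_eq_left vadd_eq_right)
    show ?thesis using n a b not_sym[OF n(1)] not_sym[OF n(2)] not_sym[OF n(3)] not_sym[OF a(2)] not_sym[OF b(2)] not_sym[OF b(3)] by simp
  qed
  have "C = {{},a,b,vadd a b}"
    using card_subset_eq[OF fin sub4] c4 assms(2) by simp
  then show ?thesis using that a b sub by blast
qed

lemma card4:
  assumes "a \<noteq> {}" "b \<noteq> {}" "a \<noteq> b"
  shows "card {{},a,b,vadd a b} = 4"
proof -
  have n: "vadd a b \<noteq> {}" "vadd a b \<noteq> a" "vadd a b \<noteq> b"
    using assms by (auto simp: vadd_eq_empty vadd_eq_left vadd_eq_right)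
  show ?thesis using n assms not_sym[OF n(1)] not_sym[OF n(2)] not_sym[OF n(3)]
    not_sym[OF assms(1)] not_sym[OF assms(2)] not_sym[OF assms(3)] by simp
qed

lemma dot_empty: "dot c {} = False" "dot {} c = False"
  unfolding dot_def by simp_all

lemma code2_props:
  assumes ab: "a \<subseteq> {..<n}" "b \<subseteq> {..<n}" "a \<noteq> {}" "b \<noteq> {}" "a \<noteq> b"
    and C: "C = {{},a,b,vadd a b}"
  shows "linear_code n C" "card C = 4"
    "min_dist C = min (card a) (min (card b) (card (vadd a b)))"
    "is_LCD n C \<longleftrightarrow> (\<exists>c\<in>{a,b,vadd a b}. dot c a) \<and> (\<exists>c\<in>{a,b,vadd a b}. dot c b)
        \<and> (\<exists>c\<in>{a,b,vadd a b}. dot c (vadd a b))"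
proof -
  have vs: "vadd a b \<subseteq> {..<n}" using ab unfolding vadd_def by blast
  have cm: "vadd b a = vadd a b" by (rule vadd_simps(8))
  show "linear_code n C" unfolding linear_code_def C using ab vs
    by (simp add: vadd_simps(1-7) cm)
  show "card C = 4" using card4 ab C by simp
  have n: "vadd a b \<noteq> {}" using ab by (simp add: vadd_eq_empty)
  have "{card x | x. x \<in> C \<and> x \<noteq> {}} = {card a, card b, card (vadd a b)}"
    using C ab n by auto
  then show "min_dist C = min (card a) (min (card b) (card (vadd a b)))"
    unfolding min_dist_def by (simp add: min.assoc)
  have emp: "{} \<in> C \<inter> dual_code n C" using C unfolding dual_code_def by (auto simp: dot_empty)
  have "is_LCD n C \<longleftrightarrow> (\<forall>c\<in>{a,b,vadd a b}. c \<notin> dual_code n C)"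
  proof
    assume "is_LCD n C" show "\<forall>c\<in>{a,b,vadd a b}. c \<notin> dual_code n C"
    proof
      fix c assume c: "c \<in> {a,b,vadd a b}"
      then have "c \<in> C" "c \<noteq> {}" using C ab n by auto
      then show "c \<notin> dual_code n C" using \<open>is_LCD n C\<close> unfolding is_LCD_def by blast
    qed
  next
    assume h: "\<forall>c\<in>{a,b,vadd a b}. c \<notin> dual_code n C"
    have "C \<inter> dual_code n C \<subseteq> {{}}"
    proof
      fix c assume "c \<in> C \<inter> dual_code n C"
      then show "c \<in> {{}}" using h C by blast
    qed
    then show "is_LCD n C" unfolding is_LCD_def using emp by blast
  qed
  also have "\<dots> \<longleftrightarrow> (\<exists>c\<in>{a,b,vadd a b}. dot c a) \<and> (\<exists>c\<in>{a,b,vadd a b}. dot c b)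
        \<and> (\<exists>c\<in>{a,b,vadd a b}. dot c (vadd a b))"
  proof -
    have key: "c \<notin> dual_code n C \<longleftrightarrow> (\<exists>x\<in>{a,b,vadd a b}. dot x c)" if "c \<subseteq> {..<n}" for c
    proof -
      have "c \<notin> dual_code n C \<longleftrightarrow> (\<exists>x\<in>C. dot x c)" unfolding dual_code_def using that by blast
      also have "\<dots> \<longleftrightarrow> (\<exists>x\<in>{a,b,vadd a b}. dot x c)" unfolding C using dot_empty by blast
      finally show ?thesis .
    qed
    show ?thesis using key[OF ab(1)] key[OF ab(2)] key[OF vs] by blast
  qed
  finally show "is_LCD n C \<longleftrightarrow> (\<exists>c\<in>{a,b,vadd a b}. dot c a) \<and> (\<exists>c\<in>{a,b,vadd a b}. dot c b)
        \<and> (\<exists>c\<in>{a,b,vadd a b}. dot c (vadd a b))" .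
qed

lemma card_facts:
  assumes "finite a" "finite b"
  shows "card a = card (a - b) + card (a \<inter> b)"
    "card b = card (b - a) + card (a \<inter> b)"
    "card (vadd a b) = card (a - b) + card (b - a)"
    "dot a a = odd (card (a - b) + card (a \<inter> b))"
    "dot b b = odd (card (b - a) + card (a \<inter> b))"
    "dot (vadd a b) (vadd a b) = odd (card (a - b) + card (b - a))"
    "dot a b = odd (card (a \<inter> b))" "dot b a = odd (card (a \<inter> b))"
    "dot a (vadd a b) = odd (card (a - b))" "dot (vadd a b) a = odd (card (a - b))"
    "dot b (vadd a b) = odd (card (b - a))" "dot (vadd a b) b = odd (card (b - a))"
proof -
  have 1: "card a = card (a - b) + card (a \<inter> b)"
    using card_Un_disjoint[of "a-b" "a \<inter> b"] assms by (metis Diff_Diff_Int Diff_disjoint Un_Diff_Int finite_Diff finite_Int)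
  have 2: "card b = card (b - a) + card (a \<inter> b)"
    using card_Un_disjoint[of "b-a" "a \<inter> b"] assms by (metis Int_commute Diff_Diff_Int Diff_disjoint Un_Diff_Int finite_Diff finite_Int)
  have 3: "card (vadd a b) = card (a - b) + card (b - a)"
    unfolding vadd_def using assms by (intro card_Un_disjoint) auto
  have i1: "vadd a b \<inter> a = a - b" "a \<inter> vadd a b = a - b"
    "vadd a b \<inter> b = b - a" "b \<inter> vadd a b = b - a" unfolding vadd_def by blast+
  show "card a = card (a - b) + card (a \<inter> b)" by (rule 1)
  show "card b = card (b - a) + card (a \<inter> b)" by (rule 2)
  show "card (vadd a b) = card (a - b) + card (b - a)" by (rule 3)
  show "dot a a = odd (card (a - b) + card (a \<inter> b))" unfolding dot_def using 1 by simp
  show "dot b b = odd (card (b - a) + card (a \<inter> b))" unfolding dot_def using 2 by simp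
  show "dot (vadd a b) (vadd a b) = odd (card (a - b) + card (b - a))" unfolding dot_def using 3 by simp
  show "dot a b = odd (card (a \<inter> b))" unfolding dot_def by simp
  show "dot b a = odd (card (a \<inter> b))" unfolding dot_def by (simp add: Int_commute)
  show "dot a (vadd a b) = odd (card (a - b))" "dot (vadd a b) a = odd (card (a - b))"
    "dot b (vadd a b) = odd (card (b - a))" "dot (vadd a b) b = odd (card (b - a))"
    unfolding dot_def i1 by simp_all
qed

lemma P_to_xyz:
  assumes "linear_code n C" "code_dim C 2" "is_LCD n C"
  shows "\<exists>x y z. x+y+z \<le> n \<and> (odd x \<or> odd z) \<and> (odd y \<or> odd z) \<and> (odd x \<or> odd y)
     \<and> min_dist C = min (x+z) (min (y+z) (x+y))"
proof -
  have "card C = 4" using assms(2) unfolding code_dim_def by simp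
  then obtain a b where ab: "C = {{},a,b,vadd a b}" "a \<noteq> {}" "b \<noteq> {}" "a \<noteq> b"
    "a \<subseteq> {..<n}" "b \<subseteq> {..<n}" using code2_struct assms(1) by metis
  have fa: "finite a" "finite b" using ab finite_subset by blast+
  note P = code2_props[OF ab(5,6,2,3,4,1)]
  note F = card_facts[OF fa]
  define x where "x = card (a - b)"
  define y where "y = card (b - a)"
  define z where "z = card (a \<inter> b)"
  have u: "a \<union> b = vadd a b \<union> (a \<inter> b)" "vadd a b \<inter> (a \<inter> b) = {}" unfolding vadd_def by blast+
  have "card (a \<union> b) = card (vadd a b) + card (a \<inter> b)"
    unfolding u(1) using u(2) fa by (intro card_Un_disjoint) (auto simp: vadd_def)
  moreover have "card (a \<union> b) \<le> n" using ab card_mono[of "{..<n}" "a \<union> b"] by simp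
  ultimately have s: "x+y+z \<le> n" using F unfolding x_def y_def z_def by simp
  have l: "(odd (x+z) \<or> odd z \<or> odd x) \<and> (odd z \<or> odd (y+z) \<or> odd y) \<and> (odd x \<or> odd y \<or> odd (x+y))"
    using P(4) assms(3) F unfolding x_def y_def z_def by simp
  have m: "min_dist C = min (x+z) (min (y+z) (x+y))"
    using P(3) F unfolding x_def y_def z_def by simp
  show ?thesis
    apply (rule exI[of _ x], rule exI[of _ y], rule exI[of _ z])
    using s l m by auto
qed

lemma xyz_to_P:
  assumes "x+y+z \<le> n" "x+z > 0" "y+z > 0" "x+y > 0" "odd x \<or> odd z" "odd y \<or> odd z" "odd x \<or> odd y"
  shows "\<exists>C. linear_code n C \<and> code_dim C 2 \<and> is_LCD n C \<and> min_dist C = min (x+z) (min (y+z) (x+y))"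
proof -
  define a where "a = {..<x+z}"
  define b where "b = {x..<x+y+z}"
  have d1: "a - b = {..<x}" unfolding a_def b_def by auto
  have d2: "b - a = {x+z..<x+y+z}" unfolding a_def b_def by auto
  have d3: "a \<inter> b = {x..<x+z}" unfolding a_def b_def by auto
  have fa: "finite a" "finite b" unfolding a_def b_def by simp_all
  note F = card_facts[OF fa]
  have cx: "card (a - b) = x" "card (b - a) = y" "card (a \<inter> b) = z" unfolding d1 d2 d3 by simp_all
  have sub: "a \<subseteq> {..<n}" "b \<subseteq> {..<n}" using assms(1) unfolding a_def b_def by auto
  have ne: "a \<noteq> {}" "b \<noteq> {}" using assms(2,3) unfolding a_def b_def by auto
  have neq: "a \<noteq> b"
  proof
    assume "a = b" then have "x = 0" "y = 0" using cx by auto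
    then show False using assms(4) by simp
  qed
  define C where "C = {{},a,b,vadd a b}"
  note P = code2_props[OF sub ne neq C_def]
  have "is_LCD n C" using P(4) F assms(5-7) unfolding cx by auto
  moreover have "code_dim C 2" unfolding code_dim_def using P(2) by simp
  moreover have "min_dist C = min (x+z) (min (y+z) (x+y))" using P(3) F unfolding cx by simp
  ultimately show ?thesis using P(1) by blast
qed

lemma ub5: assumes "(x::nat)+y+z \<le> 6*r+5" "odd x \<or> odd z" "odd y \<or> odd z" "odd x \<or> odd y"
  shows "min (x+z) (min (y+z) (x+y)) \<le> 4*r+2"
proof (rule ccontr)
  assume "\<not> ?thesis"
  hence h: "x+z \<ge> 4*r+3" "y+z \<ge> 4*r+3" "x+y \<ge> 4*r+3" by auto
  have "x = 2*r+1 \<or> x = 2*r+2" "y = 2*r+1 \<or> y = 2*r+2" "z = 2*r+1 \<or> z = 2*r+2"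
    using h assms(1) by linarith+
  then show False using assms h by auto
qed

lemma ub6: assumes "(x::nat)+y+z \<le> 6*r+6" "odd x \<or> odd z" "odd y \<or> odd z" "odd x \<or> odd y"
  shows "min (x+z) (min (y+z) (x+y)) \<le> 4*r+3"
proof (rule ccontr)
  assume "\<not> ?thesis"
  hence h: "x+z \<ge> 4*r+4" "y+z \<ge> 4*r+4" "x+y \<ge> 4*r+4" by auto
  have "x = 2*r+2" "y = 2*r+2" "z = 2*r+2"
    using h assms(1) by linarith+
  hence "even x" "even y" "even z" by simp_all
  then show False using assms by blast
qed

lemma ubg: assumes "(x::nat)+y+z \<le> n" "3*D+3 > 2*n"
  shows "min (x+z) (min (y+z) (x+y)) \<le> D"
  using assms by linarith

lemma LCD_eq:
  assumes ex: "x0+y0+z0 \<le> n" "x0+z0 > 0" "y0+z0 > 0" "x0+y0 > 0" "odd x0 \<or> odd z0" "odd y0 \<or> odd z0" "odd x0 \<or> odd y0"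
    "D = min (x0+z0) (min (y0+z0) (x0+y0))"
  and ub: "\<And>x y z. x+y+z \<le> n \<Longrightarrow> odd x \<or> odd z \<Longrightarrow> odd y \<or> odd z \<Longrightarrow> odd x \<or> odd y
     \<Longrightarrow> min (x+z) (min (y+z) (x+y)) \<le> D"
  shows "LCD n 2 = D"
  unfolding LCD_def
proof (rule Greatest_equality)
  show "\<exists>C. linear_code n C \<and> code_dim C 2 \<and> is_LCD n C \<and> min_dist C = D"
    using xyz_to_P[OF ex(1-7)] ex(8) by simp
next
  fix d assume "\<exists>C. linear_code n C \<and> code_dim C 2 \<and> is_LCD n C \<and> min_dist C = d"
  then obtain C where C: "linear_code n C" "code_dim C 2" "is_LCD n C" "min_dist C = d" by blast
  from P_to_xyz[OF C(1-3)] obtain x y z where "x+y+z \<le> n" "odd x \<or> odd z" "odd y \<or> odd z" "odd x \<or> odd y"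
     "min_dist C = min (x+z) (min (y+z) (x+y))" by blast
  then show "d \<le> D" using ub C(4) by metis
qed

theorem theorem2p6:
  fixes r :: nat
  shows "LCD (6*r+3) 2 = 4*r+2 \<and>
         LCD (6*r+4) 2 = 4*r+2 \<and>
         LCD (6*r+5) 2 = 4*r+2 \<and>
         LCD (6*r+6) 2 = 4*r+3 \<and>
         LCD (6*r+7) 2 = 4*r+4 \<and>
         LCD (6*r+8) 2 = 4*r+5"
proof (intro conjI)
  show "LCD (6*r+3) 2 = 4*r+2"
    by (rule LCD_eq[of "2*r+1" "2*r+1" "2*r+1"]) (simp_all add: ubg)
  show "LCD (6*r+4) 2 = 4*r+2"
    by (rule LCD_eq[of "2*r+1" "2*r+1" "2*r+1"]) (simp_all add: ubg)
  show "LCD (6*r+5) 2 = 4*r+2"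
    by (rule LCD_eq[of "2*r+1" "2*r+1" "2*r+1", OF _ _ _ _ _ _ _ _ ub5]) simp_all
  show "LCD (6*r+6) 2 = 4*r+3"
    by (rule LCD_eq[of "2*r+1" "2*r+2" "2*r+3", OF _ _ _ _ _ _ _ _ ub6]) simp_all
  show "LCD (6*r+7) 2 = 4*r+4"
    by (rule LCD_eq[of "2*r+1" "2*r+3" "2*r+3"]) (simp_all add: ubg)
  show "LCD (6*r+8) 2 = 4*r+5"
    by (rule LCD_eq[of "2*r+3" "2*r+3" "2*r+2"]) (simp_all add: ubg)
qed

end
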